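(* Let $T$ be a string, let $1\le j\le |T|$, $1\le i\le j+1$, let $w$ be a string, and let $L=T[1..i-1]$, $R=T[j+1..|T|]$ and $T'=LwR$. Assume $|L|\ge |R|$, $|w|\le |L|/2$, and that the longest border of $Lw$ is longer than $|w|$. Partition the set of borders of $Lw$ into groups $G_1,\dots,G_m$ so that two borders lie in the same group iff they have the same smallest period, and let $p_k$ be the common smallest period of the borders in $G_k$. Assume that $T'$ has a border longer than $R$, and let $b^\star$ be the border of $Lw$ such that $b^\star R$ is the longest border of $T'$; let $k^\star$ be the index of the group containing $b^\star$. Let $\alpha_{k^\star}$ be the exponent of the longest prefix of $T'$ having period $p_{k^\star}$, and let $r_{k^\star}=\mathit{lce}_{T'}(|T'|-|R|-p_{k^\star}+1,\ |T'|-|R|+1)$. If $b^\star$ is periodic and $p_{k^\star}\ne\mathsf{per}(b^\star R)$, then $|b^\star|=\alpha_{k^\star}p_{k^\star}-r_{k^\star}$.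
   Context: $S[i..j]$ denotes the factor of $S$ from position $i$ to $j$ (empty if $i>j$). A border of a nonempty string $S$ is a string that is both a proper prefix and a proper suffix of $S$. If $S$ has a border $b$ then $|S|-|b|$ is a period of $S$; $\mathsf{per}(S)$ is the smallest period of $S$. The exponent of $S$ is $|S|/\mathsf{per}(S)$; $S$ is periodic if $\mathsf{per}(S)\le|S|/2$. For a string $S$ and positions $a,b$, $\mathit{lce}_S(a,b)$ is the length of the longest common prefix of $S[a..|S|]$ and $S[b..|S|]$. *)

theory Defs
  imports Complex_Main "HOL-Library.Sublist"
begin

(* Strings are lists; positions are 1-based in the paper. *)

definition is_border :: "'a list \<Rightarrow> 'a list \<Rightarrow> bool" where
  "is_border b S \<longleftrightarrow> S \<noteq> [] \<and> strict_prefix b S \<and> strict_suffix b S"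

definition is_longest_border :: "'a list \<Rightarrow> 'a list \<Rightarrow> bool" where
  "is_longest_border b S \<longleftrightarrow> is_border b S \<and> (\<forall>c. is_border c S \<longrightarrow> length c \<le> length b)"

definition has_period :: "'a list \<Rightarrow> nat \<Rightarrow> bool" where
  "has_period S p \<longleftrightarrow> 0 < p \<and> p \<le> length S \<and> (\<forall>k. k + p < length S \<longrightarrow> S ! k = S ! (k + p))"

definition per :: "'a list \<Rightarrow> nat" where
  "per S = (LEAST p. has_period S p)"

definition exponent :: "'a list \<Rightarrow> real" where
  "exponent S = real (length S) / real (per S)"

definition periodic :: "'a list \<Rightarrow> bool" where
  "periodic S \<longleftrightarrow> S \<noteq> [] \<and> 2 * per S \<le> length S"

definition longest_prefix_with_period :: "'a list \<Rightarrow> nat \<Rightarrow> 'a list" where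
  "longest_prefix_with_period S p =
     take (GREATEST n. n \<le> length S \<and> has_period (take n S) p) S"

definition lce :: "'a list \<Rightarrow> nat \<Rightarrow> nat \<Rightarrow> nat" where
  "lce S a b = (GREATEST n. n \<le> length S \<and>
       take n (drop (a - 1) S) = take n (drop (b - 1) S) \<and>
       n \<le> length (drop (a - 1) S) \<and> n \<le> length (drop (b - 1) S))"

end

theory Submission
  imports Defs
begin

lemma per_has: "S \<noteq> [] \<Longrightarrow> has_period S (per S)"
  unfolding per_def by (rule LeastI[of _ "length S"]) (auto simp: has_period_def)

lemma per_le: "has_period S q \<Longrightarrow> per S \<le> q"
  unfolding per_def by (rule Least_le)

lemma has_period_take:
  assumes "has_period S q" "q \<le> m" "m \<le> length S"
  shows "has_period (take m S) q"
  using assms unfolding has_period_def by auto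

lemma core:
  fixes X R bs :: "'a list"
  assumes pre: "prefix (bs @ R) (X @ R)" and suf: "suffix bs X"
    and ne: "bs \<noteq> []" and per2: "2 * per bs \<le> length bs"
    and pne: "per bs \<noteq> per (bs @ R)"
  shows "real (length bs) = exponent (longest_prefix_with_period (X @ R) (per bs)) * real (per bs)
     - real (lce (X @ R) (length (X @ R) - length R - per bs + 1) (length (X @ R) - length R + 1))"
proof -
  define S where "S = X @ R"
  define n where "n = length X"
  define b where "b = length bs"
  define p where "p = per bs"
  have F0: "has_period bs p" using per_has[OF ne] p_def by simp
  hence p0: "0 < p" and pb: "p \<le> b" using b_def by (auto simp: has_period_def)
  have F0': "\<And>k. k + p < b \<Longrightarrow> bs ! k = bs ! (k + p)" using F0 b_def by (auto simp: has_period_def)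
  obtain z where Sz: "S = bs @ R @ z" using pre S_def by (auto simp: prefix_def)
  obtain u where Xu: "X = u @ bs" using suf by (auto simp: suffix_def)
  have bn: "b \<le> n" using Xu b_def n_def by simp
  have lenS: "length S = n + length R" using S_def n_def by simp
  have lenS2: "b + length R \<le> length S" using Sz b_def by simp
  have F1: "\<And>k. k < b \<Longrightarrow> S ! k = bs ! k" using Sz b_def by (simp add: nth_append)
  have F2: "\<And>k. k < length R \<Longrightarrow> S ! (b + k) = R ! k" using Sz b_def by (simp add: nth_append)
  have F3: "\<And>k. k < b \<Longrightarrow> S ! (n - b + k) = bs ! k" using S_def Xu b_def n_def
    by (simp add: nth_append)
  have F4: "\<And>k. k < length R \<Longrightarrow> S ! (n + k) = R ! k" using S_def n_def by (simp add: nth_append)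
  have bsS: "bs = take b S" using Sz b_def by simp
  have ex: "\<exists>y. b \<le> y \<and> y < b + length R \<and> S ! (y - p) \<noteq> S ! y"
  proof (rule ccontr)
    assume "\<not> ?thesis"
    hence all: "\<And>y. b \<le> y \<Longrightarrow> y < b + length R \<Longrightarrow> S ! (y - p) = S ! y" by blast
    have bRS: "bs @ R = take (b + length R) S" using Sz b_def by simp
    have hp: "has_period (bs @ R) p"
      unfolding has_period_def
    proof (intro conjI allI impI)
      show "0 < p" by fact
      show "p \<le> length (bs @ R)" using pb b_def by simp
      fix k assume k: "k + p < length (bs @ R)"
      have e1: "(bs @ R) ! k = S ! k" "(bs @ R) ! (k + p) = S ! (k + p)"
        using k bRS b_def by auto
      show "(bs @ R) ! k = (bs @ R) ! (k + p)"
      proof (cases "k + p < b")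
        case True thus ?thesis using e1 F1 F0' by simp
      next
        case False
        hence "S ! (k + p - p) = S ! (k + p)" using all[of "k+p"] k b_def by simp
        thus ?thesis using e1 by simp
      qed
    qed
    define q where "q = per (bs @ R)"
    have qp: "q \<le> p" using per_le[OF hp] q_def by simp
    have hq: "has_period (bs @ R) q" using per_has[of "bs @ R"] ne q_def by simp
    have "has_period bs q"
    proof -
      have "has_period (take b (bs @ R)) q"
        by (rule has_period_take[OF hq]) (use qp pb hq b_def in \<open>auto simp: has_period_def\<close>)
      thus ?thesis using b_def by simp
    qed
    hence "p \<le> q" using per_le p_def by blast
    thus False using qp pne p_def q_def by simp
  qed
  define x where "x = (LEAST y. b \<le> y \<and> y < b + length R \<and> S ! (y - p) \<noteq> S ! y)"
  have xP: "b \<le> x \<and> x < b + length R \<and> S ! (x - p) \<noteq> S ! x"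
    unfolding x_def using ex by (rule LeastI_ex)
  have xmin: "\<And>y. b \<le> y \<Longrightarrow> y < x \<Longrightarrow> S ! (y - p) = S ! y"
  proof -
    fix y assume "b \<le> y" "y < x"
    hence "\<not> (b \<le> y \<and> y < b + length R \<and> S ! (y - p) \<noteq> S ! y)"
      using not_less_Least x_def by blast
    thus "S ! (y - p) = S ! y" using \<open>b \<le> y\<close> \<open>y < x\<close> xP by auto
  qed
  have PP: "\<And>k. k + p < x \<Longrightarrow> S ! k = S ! (k + p)"
  proof -
    fix k assume k: "k + p < x"
    show "S ! k = S ! (k + p)"
    proof (cases "k + p < b")
      case True thus ?thesis using F1 F0' by simp
    next
      case False thus ?thesis using xmin[of "k+p"] k by simp
    qed
  qed
  have xS: "x \<le> length S" using xP lenS2 by simp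
  have hpx: "has_period (take x S) p"
    unfolding has_period_def using p0 pb xP xS PP by auto
  have G: "(GREATEST m. m \<le> length S \<and> has_period (take m S) p) = x"
  proof (rule Greatest_equality)
    show "x \<le> length S \<and> has_period (take x S) p" using xS hpx by simp
  next
    fix y assume y: "y \<le> length S \<and> has_period (take y S) p"
    show "y \<le> x"
    proof (rule ccontr)
      assume "\<not> y \<le> x"
      hence "x - p + p < length (take y S)" using y xP pb by simp
      hence "take y S ! (x - p) = take y S ! (x - p + p)" using y by (simp add: has_period_def)
      moreover have "x - p + p = x" using xP pb by simp
      ultimately have "S ! (x - p) = S ! x" using \<open>\<not> y \<le> x\<close> by simp
      thus False using xP by simp
    qed
  qed
  have LP: "longest_prefix_with_period S p = take x S"
    unfolding longest_prefix_with_period_def G ..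
  have perx: "per (take x S) = p"
  proof -
    have q1: "per (take x S) \<le> p" using per_le[OF hpx] .
    have ne2: "take x S \<noteq> []" using hpx by (auto simp: has_period_def)
    have hq: "has_period (take x S) (per (take x S))" using per_has[OF ne2] .
    have "has_period (take b (take x S)) (per (take x S))"
      by (rule has_period_take[OF hq]) (use q1 pb xP xS in auto)
    hence "has_period bs (per (take x S))" using bsS xP by (simp add: min_def)
    hence "p \<le> per (take x S)" using per_le p_def by blast
    thus ?thesis using q1 by simp
  qed
  have expo: "exponent (take x S) * real p = real x"
    unfolding exponent_def perx using xS p0 by simp
  define d where "d = x - b"
  have xbd: "x = b + d" using d_def xP by simp
  have dR: "d < length R" using xP d_def by linarith
  have a1: "length S - length R - p + 1 - 1 = n - p" using lenS pb bn by simp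
  have b1: "length S - length R + 1 - 1 = n" using lenS by simp
  have dropn: "drop n S = R" using S_def n_def by simp
  have Gk: "\<And>k. k < length R \<Longrightarrow> drop (n - p) S ! k = S ! (b + k - p)"
  proof -
    fix k assume k: "k < length R"
    have "drop (n - p) S ! k = S ! (n - p + k)" using k lenS pb bn by simp
    also have "\<dots> = S ! (b + k - p)"
    proof (cases "k < p")
      case True
      have "b - p + k < b" using True pb by simp
      hence "S ! (n - b + (b - p + k)) = bs ! (b - p + k)" by (rule F3)
      moreover have "n - b + (b - p + k) = n - p + k" using pb bn by simp
      moreover have "S ! (b + k - p) = bs ! (b - p + k)"
        using F1[of "b + k - p"] True pb by (simp add: add.commute)
      ultimately show ?thesis by simp
    next
      case False
      have "S ! (n + (k - p)) = R ! (k - p)" using F4 k by simp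
      moreover have "S ! (b + (k - p)) = R ! (k - p)" using F2 k by simp
      moreover have "n + (k - p) = n - p + k" "b + (k - p) = b + k - p" using False pb bn by auto
      ultimately show ?thesis by simp
    qed
    finally show "drop (n - p) S ! k = S ! (b + k - p)" .
  qed
  have lenD: "length (drop (n - p) S) = length R + p" using lenS pb bn by simp
  have L: "lce S (length S - length R - p + 1) (length S - length R + 1) = d"
    unfolding lce_def a1 b1 dropn
  proof (rule Greatest_equality)
    have "take d (drop (n - p) S) = take d R"
    proof (rule nth_equalityI)
      show "length (take d (drop (n - p) S)) = length (take d R)" using lenD dR by simp
    next
      fix k assume "k < length (take d (drop (n - p) S))"
      hence k: "k < d" using lenD dR by simp
      have "drop (n - p) S ! k = S ! (b + k - p)" using Gk k dR by simp
      also have "\<dots> = S ! (b + k)" using xmin[of "b+k"] k xbd by simp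
      also have "\<dots> = R ! k" using F2 k dR by simp
      finally show "take d (drop (n - p) S) ! k = take d R ! k" using k by simp
    qed
    thus "d \<le> length S \<and> take d (drop (n - p) S) = take d R \<and> d \<le> length (drop (n - p) S) \<and> d \<le> length R"
      using dR lenD lenS by simp
  next
    fix m assume m: "m \<le> length S \<and> take m (drop (n - p) S) = take m R \<and> m \<le> length (drop (n - p) S) \<and> m \<le> length R"
    show "m \<le> d"
    proof (rule ccontr)
      assume "\<not> m \<le> d"
      hence "take m (drop (n - p) S) ! d = take m R ! d" using m by simp
      hence "drop (n - p) S ! d = R ! d" using \<open>\<not> m \<le> d\<close> by simp
      hence "S ! (b + d - p) = S ! (b + d)" using Gk[OF dR] F2[OF dR] by simp
      thus False using xP xbd by simp
    qed
  qed
  show ?thesis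
    using expo L LP xbd unfolding S_def[symmetric] p_def[symmetric] b_def[symmetric] by simp
qed

theorem lemma10:
  fixes T w :: "'a list" and i j :: nat and bstar :: "'a list"
  defines "L \<equiv> take (i - 1) T"
      and "R \<equiv> drop j T"
      and "T' \<equiv> take (i - 1) T @ w @ drop j T"
  assumes "1 \<le> j" and "j \<le> length T" and "1 \<le> i" and "i \<le> j + 1"
      and "length L \<ge> length R"
      and "2 * length w \<le> length L"
      and "\<exists>b. is_longest_border b (L @ w) \<and> length b > length w"
      and "\<exists>c. is_border c T' \<and> length c > length R"
      and "is_border bstar (L @ w)"
      and "is_longest_border (bstar @ R) T'"
      and "periodic bstar"
      and "per bstar \<noteq> per (bstar @ R)"
  shows "real (length bstar) =
           exponent (longest_prefix_with_period T' (per bstar)) * real (per bstar)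
           - real (lce T' (length T' - length R - per bstar + 1) (length T' - length R + 1))"
proof -
  have T'eq: "T' = (L @ w) @ R" unfolding T'_def L_def R_def by simp
  have pre: "prefix (bstar @ R) ((L @ w) @ R)"
    using assms(13) T'eq by (auto simp: is_longest_border_def is_border_def strict_prefix_def)
  have suf: "suffix bstar (L @ w)"
    using assms(12) by (auto simp: is_border_def strict_suffix_def)
  show ?thesis unfolding T'eq
    by (rule core[OF pre suf]) (use assms(14,15) in \<open>auto simp: periodic_def\<close>)
qed

end
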